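(* Let $V$ be a subspace of $\mathbb{R}^n$ and let $A\in\mathbb{R}^{m\times n}$ have i.i.d. $\mathcal{N}(0,1/m)$ entries. With probability $1$, $|\{\mathrm{diag}(\mathrm{sgn}(Av))A:v\in V\}|\leqslant10m^{2\dim V}$.
   Context: $\mathrm{sgn}$ acts entrywise with $\mathrm{sgn}(0)=0$; $\mathrm{diag}(u)$ is the diagonal matrix with diagonal $u$. *)

theory Defs
  imports "HOL-Probability.Probability"
begin

definition diag_mat :: "real^'m \<Rightarrow> real^'m^'m" where
  "diag_mat u = (\<chi> i j. if i = j then u $ i else 0)"

definition sgn_vec :: "real^'m \<Rightarrow> real^'m" where
  "sgn_vec u = (\<chi> i. sgn (u $ i))"

text \<open>Random m x n matrix with i.i.d. N(0,1/m) entries (standard deviation 1/sqrt m),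
  modelled as product measure over the entry index set.\<close>
definition gauss_entries :: "('m::finite \<times> 'n::finite \<Rightarrow> real) measure" where
  "gauss_entries = PiM UNIV (\<lambda>_. density lborel (normal_density 0 (1 / sqrt (real CARD('m)))))"

definition to_mat :: "('m::finite \<times> 'n::finite \<Rightarrow> real) \<Rightarrow> real^'n^'m" where
  "to_mat f = (\<chi> i j. f (i, j))"

end

theory Submission
  imports Defs
begin

fun gb :: "nat \<Rightarrow> nat \<Rightarrow> nat" where
  "gb 0 d = 1"
| "gb (Suc m) 0 = 1"
| "gb (Suc m) (Suc d) = gb m (Suc d) + 2 * gb m d"

lemma gb_0[simp]: "gb m 0 = 1"
  by (cases m) auto

lemma gb_mono_m: "gb m d \<le> gb (Suc m) d"
  by (cases d) auto

lemma pw2: "(x::nat) ^ (2 * Suc e) = x^2 * x^(2*e)"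
  by (simp add: power_add[symmetric])

lemma gb_bound: "gb (Suc m) d \<le> 3 * (Suc m) ^ (2 * d)"
proof (induction m arbitrary: d)
  case 0
  then show ?case by (cases d) auto
next
  case (Suc m)
  show ?case
  proof (cases d)
    case 0
    then show ?thesis by simp
  next
    case (Suc e)
    have "gb (Suc (Suc m)) d = gb (Suc m) (Suc e) + 2 * gb (Suc m) e" using Suc by simp
    also have "\<dots> \<le> 3 * (Suc m) ^ (2 * Suc e) + 2 * (3 * (Suc m) ^ (2 * e))"
      using Suc.IH[of "Suc e"] Suc.IH[of e] by linarith
    also have "\<dots> = 3 * ((Suc m)^2 * (Suc m) ^ (2 * e) + 2 * (Suc m) ^ (2 * e))"
      unfolding pw2 by (simp add: algebra_simps)
    also have "\<dots> \<le> 3 * ((Suc (Suc m))^2 * (Suc (Suc m)) ^ (2 * e))"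
    proof -
      have "(Suc m) ^ (2 * e) \<le> (Suc (Suc m)) ^ (2 * e)" by (rule power_mono) auto
      moreover have "(Suc m)^2 + 2 \<le> (Suc (Suc m))^2" by (simp add: power2_eq_square)
      ultimately have "((Suc m)^2 + 2) * (Suc m) ^ (2 * e) \<le> (Suc (Suc m))^2 * (Suc (Suc m)) ^ (2 * e)"
        by (intro mult_mono) auto
      then show ?thesis by (simp add: algebra_simps)
    qed
    also have "\<dots> = 3 * (Suc (Suc m)) ^ (2 * d)"
      using Suc by (simp only: pw2)
    finally show ?thesis .
  qed
qed

definition sset :: "'i set \<Rightarrow> ('i \<Rightarrow> real^'n) \<Rightarrow> (real^'n) set \<Rightarrow> ('i \<Rightarrow> real) set" where
  "sset I r V = (\<lambda>v. \<lambda>i. if i \<in> I then sgn (r i \<bullet> v) else 0) ` V"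

lemma sgn_comb:
  fixes p q \<alpha> \<beta> :: real
  assumes "sgn p = sgn q" "\<alpha> > 0" "\<beta> > 0"
  shows "sgn (\<alpha> * p + \<beta> * q) = sgn p"
proof -
  consider "p > 0" "q > 0" | "p < 0" "q < 0" | "p = 0" "q = 0"
    using assms(1) by (cases "p > 0"; cases "p < 0"; cases "q > 0"; cases "q < 0") (auto simp: sgn_if)
  then show ?thesis
  proof cases
    case 1
    then have "\<alpha> * p > 0" "\<beta> * q > 0" using assms by auto
    then show ?thesis using 1 by simp
  next
    case 2
    then have "\<alpha> * p < 0" "\<beta> * q < 0" using assms by (auto simp: mult_pos_neg)
    then show ?thesis using 2 by simp
  qed simp
qed

lemma core:
  assumes "finite I"
  shows "subspace V \<Longrightarrow> dim V \<le> d \<Longrightarrow> finite (sset I r V) \<and> card (sset I r V) \<le> gb (card I) d"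
  using assms
proof (induction I arbitrary: V d rule: finite_induct)
  case empty
  have "sset {} r V = {\<lambda>i. 0}"
    using subspace_0[OF empty.prems(1)] by (auto simp: sset_def)
  then show ?case by simp
next
  case (insert a I)
  define T where "T = sset I r V"
  have T: "finite T" "card T \<le> gb (card I) d" using insert.IH[OF insert.prems] by (auto simp: T_def)
  have proj: "s = (s (a:=0))(a := s a)" for s :: "'a \<Rightarrow> real" by simp
  have inT: "(\<lambda>i. if i \<in> insert a I then sgn (r i \<bullet> v) else 0)(a := 0) \<in> T" if "v \<in> V" for v
  proof -
    have "(\<lambda>i. if i \<in> insert a I then sgn (r i \<bullet> v) else 0)(a := 0) = (\<lambda>i. if i \<in> I then sgn (r i \<bullet> v) else 0)"
      using insert.hyps(2) by auto
    then show ?thesis using that by (auto simp: T_def sset_def)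
  qed
  show ?case
  proof (cases "\<forall>v\<in>V. r a \<bullet> v = 0")
    case True
    have "sset (insert a I) r V \<subseteq> (\<lambda>t. t(a:=0)) ` T"
    proof
      fix s assume "s \<in> sset (insert a I) r V"
      then obtain v where v: "v \<in> V" "s = (\<lambda>i. if i \<in> insert a I then sgn (r i \<bullet> v) else 0)"
        by (auto simp: sset_def)
      have "s = (s(a:=0))(a:=0)" using v True by auto
      then show "s \<in> (\<lambda>t. t(a:=0)) ` T" using inT[OF v(1)] v(2) by blast
    qed
    then have "finite (sset (insert a I) r V)" "card (sset (insert a I) r V) \<le> card T"
      using T(1) finite_surj card_image_le card_mono by (blast, metis (no_types, lifting) card_image_le card_mono finite_imageI order_trans)
    then show ?thesis using T(2) gb_mono_m[of "card I" d] insert.hyps by simp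
  next
    case False
    then obtain v0 where v0: "v0 \<in> V" "r a \<bullet> v0 \<noteq> 0" by blast
    define W where "W = {v \<in> V. r a \<bullet> v = 0}"
    have sW: "subspace W" using insert.prems(1) unfolding W_def subspace_def
      by (auto simp: inner_add_right inner_scaleR_right)
    have WV: "W \<subseteq> V" "W \<noteq> V" using v0 by (auto simp: W_def)
    have "dim W < dim V"
    proof (rule ccontr)
      assume "\<not> dim W < dim V"
      then have "dim V \<le> dim W" by simp
      then have "W = V" using subspace_dim_equal[OF sW insert.prems(1) WV(1)] by simp
      then show False using WV by simp
    qed
    then obtain e where e: "d = Suc e" "dim W \<le> e" using insert.prems(2)
      by (cases d) auto
    define U where "U = sset I r W"
    have U: "finite U" "card U \<le> gb (card I) e" using insert.IH[OF sW e(2)] by (auto simp: U_def)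
    have UT: "U \<subseteq> T" using WV(1) by (auto simp: U_def T_def sset_def)
    define \<sigma> where "\<sigma> t = (SOME c. \<exists>v\<in>V. t = (\<lambda>i. if i \<in> I then sgn (r i \<bullet> v) else 0) \<and> c = sgn (r a \<bullet> v))" for t
    have uniq: "sgn (r a \<bullet> v1) = sgn (r a \<bullet> v2)"
      if H: "v1 \<in> V" "v2 \<in> V" "t \<notin> U"
        "t = (\<lambda>i. if i \<in> I then sgn (r i \<bullet> v1) else 0)"
        "t = (\<lambda>i. if i \<in> I then sgn (r i \<bullet> v2) else 0)" for t v1 v2
    proof (rule ccontr)
      assume ne: "sgn (r a \<bullet> v1) \<noteq> sgn (r a \<bullet> v2)"
      have sI: "sgn (r i \<bullet> v1) = sgn (r i \<bullet> v2)" if "i \<in> I" for i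
        using that fun_cong[OF trans[OF sym[OF H(4)] H(5)], of i] \<open>i \<in> I\<close> by simp
      have inU: "t \<in> U" if "w \<in> W" "\<forall>i\<in>I. sgn (r i \<bullet> w) = sgn (r i \<bullet> v1)" for w
      proof -
        have "t = (\<lambda>i. if i \<in> I then sgn (r i \<bullet> w) else 0)"
          using that(2) H(4) by auto
        then show ?thesis using that(1) by (auto simp: U_def sset_def)
      qed
      consider "r a \<bullet> v1 = 0" | "r a \<bullet> v2 = 0" | "r a \<bullet> v1 \<noteq> 0 \<and> r a \<bullet> v2 \<noteq> 0" by blast
      then show False
      proof cases
        case 1 then show False using inU[of v1] H(1,3) by (auto simp: W_def)
      next
        case 2 then show False using inU[of v2] H(2,3) sI by (auto simp: W_def)
      next
        case 3
        then have opp: "(r a \<bullet> v1) * (r a \<bullet> v2) < 0" using ne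
          by (cases "r a \<bullet> v1 > 0"; cases "r a \<bullet> v2 > 0") (auto simp: sgn_if mult_pos_neg mult_neg_pos)
        define x1 where "x1 = r a \<bullet> v1"
        define x2 where "x2 = r a \<bullet> v2"
        define \<alpha> where "\<alpha> = \<bar>x2\<bar>"
        define \<beta> where "\<beta> = \<bar>x1\<bar>"
        define w where "w = \<alpha> *\<^sub>R v1 + \<beta> *\<^sub>R v2"
        have pos: "\<alpha> > 0" "\<beta> > 0" using 3 by (auto simp: \<alpha>_def \<beta>_def x1_def x2_def)
        have "w \<in> V" using H(1,2) insert.prems(1) unfolding w_def
          by (simp add: subspace_add subspace_scale)
        moreover have "r a \<bullet> w = 0"
          using opp unfolding w_def \<alpha>_def \<beta>_def x1_def[symmetric] x2_def[symmetric]
          by (auto simp: inner_add_right x1_def[symmetric] x2_def[symmetric] abs_if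
              mult_less_0_iff algebra_simps split: if_splits)
        ultimately have "w \<in> W" by (simp add: W_def)
        moreover have "\<forall>i\<in>I. sgn (r i \<bullet> w) = sgn (r i \<bullet> v1)"
          using sgn_comb[OF sI pos] by (auto simp: w_def inner_add_right)
        ultimately show False using inU H(3) by blast
      qed
    qed
    have cover: "sset (insert a I) r V \<subseteq> (\<lambda>t. t(a := \<sigma> t)) ` (T - U) \<union> (\<lambda>(t,c). t(a:=c)) ` (U \<times> {-1,0,1})"
    proof
      fix s assume "s \<in> sset (insert a I) r V"
      then obtain v where v: "v \<in> V" "s = (\<lambda>i. if i \<in> insert a I then sgn (r i \<bullet> v) else 0)"
        by (auto simp: sset_def)
      define t where "t = (\<lambda>i. if i \<in> I then sgn (r i \<bullet> v) else 0)"
      have st: "s = t(a := sgn (r a \<bullet> v))" using v insert.hyps(2) by (auto simp: t_def)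
      have tT: "t \<in> T" using v(1) by (auto simp: T_def sset_def t_def)
      show "s \<in> (\<lambda>t. t(a := \<sigma> t)) ` (T - U) \<union> (\<lambda>(t,c). t(a:=c)) ` (U \<times> {-1,0,1})"
      proof (cases "t \<in> U")
        case True
        have "sgn (r a \<bullet> v) \<in> {-1,0,1}" by (simp add: sgn_if)
        then have "(t, sgn (r a \<bullet> v)) \<in> U \<times> {-1,0,1}" using True by simp
        then show ?thesis using st by force
      next
        case False
        have ex: "\<exists>c. \<exists>v\<in>V. t = (\<lambda>i. if i \<in> I then sgn (r i \<bullet> v) else 0) \<and> c = sgn (r a \<bullet> v)"
          using v(1) t_def by blast
        from someI_ex[OF ex] obtain v' where v': "v' \<in> V"
          "t = (\<lambda>i. if i \<in> I then sgn (r i \<bullet> v') else 0)" "\<sigma> t = sgn (r a \<bullet> v')"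
          unfolding \<sigma>_def by blast
        have "\<sigma> t = sgn (r a \<bullet> v)" using uniq[OF v'(1) v(1) False v'(2) t_def] v'(3) by simp
        then have "s = t(a := \<sigma> t)" using st by simp
        then have "s \<in> (\<lambda>t. t(a := \<sigma> t)) ` (T - U)"
          using tT False by (intro image_eqI[where x=t]) auto
        then show ?thesis by (rule UnI1)
      qed
    qed
    have fin: "finite ((\<lambda>t. t(a := \<sigma> t)) ` (T - U) \<union> (\<lambda>(t,c). t(a:=c)) ` (U \<times> {-1,0,1}))"
      using T(1) U(1) by auto
    have "card (sset (insert a I) r V) \<le> card ((\<lambda>t. t(a := \<sigma> t)) ` (T - U) \<union> (\<lambda>(t,c). t(a:=c)) ` (U \<times> {-1,0,1}))"
      using card_mono[OF fin cover] .
    also have "\<dots> \<le> card ((\<lambda>t. t(a := \<sigma> t)) ` (T - U)) + card ((\<lambda>(t,c). t(a:=c)) ` (U \<times> {-1,0,1::real}))"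
      by (rule card_Un_le)
    also have "\<dots> \<le> card (T - U) + card (U \<times> {-1,0,1::real})"
      by (intro add_mono card_image_le) (use T(1) U(1) in auto)
    also have "\<dots> = card T - card U + 3 * card U"
      using T(1) UT finite_subset[OF UT T(1)] by (simp add: card_Diff_subset card_cartesian_product)
    also have "\<dots> = card T + 2 * card U" using card_mono[OF T(1) UT] by simp
    also have "\<dots> \<le> gb (card I) d + 2 * gb (card I) e" using T(2) U(2) by simp
    also have "\<dots> = gb (card (insert a I)) d" using insert.hyps e(1) by simp
    finally show ?thesis using finite_subset[OF cover fin] by simp
  qed
qed

theorem lemma25:
  fixes V :: "(real^'n::finite) set"
  assumes "subspace V"
  shows "AE f in (gauss_entries :: ('m::finite \<times> 'n \<Rightarrow> real) measure).
           finite {diag_mat (sgn_vec (to_mat f *v v)) ** to_mat f | v. v \<in> V} \<and>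
           card {diag_mat (sgn_vec (to_mat f *v v)) ** to_mat f | v. v \<in> V}
             \<le> 10 * CARD('m) ^ (2 * dim V)"
proof (rule AE_I2)
  fix f :: "'m \<times> 'n \<Rightarrow> real"
  define A where "A = to_mat f"
  define S where "S = sset (UNIV :: 'm set) (\<lambda>i. A $ i) V"
  have eq: "{diag_mat (sgn_vec (A *v v)) ** A | v. v \<in> V} = (\<lambda>s. diag_mat (\<chi> i. s i) ** A) ` S"
    by (auto simp: S_def sset_def sgn_vec_def matrix_mult_dot)
  have c: "finite S" "card S \<le> gb CARD('m) (dim V)"
    using core[of "UNIV :: 'm set" V "dim V" "\<lambda>i. A $ i"] assms by (auto simp: S_def)
  obtain k where k: "CARD('m) = Suc k" using gr0_implies_Suc[of "CARD('m)"] by fastforce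
  have "card S \<le> 3 * CARD('m) ^ (2 * dim V)" using c(2) gb_bound[of k "dim V"] k by simp
  then have "card ((\<lambda>s. diag_mat (\<chi> i. s i) ** A) ` S) \<le> 10 * CARD('m) ^ (2 * dim V)"
    using card_image_le[OF c(1), of "\<lambda>s. diag_mat (\<chi> i. s i) ** A"] by linarith
  then show "finite {diag_mat (sgn_vec (to_mat f *v v)) ** to_mat f | v. v \<in> V} \<and>
           card {diag_mat (sgn_vec (to_mat f *v v)) ** to_mat f | v. v \<in> V}
             \<le> 10 * CARD('m) ^ (2 * dim V)"
    using eq c(1) by (simp add: A_def)
qed

end
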